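(* Let $A$ be a circular $m\times n$ matrix, $b\in\mathbb{Z}_+^m$, and let $\Gamma$ be a circuit in $D(A)$ with $p(\Gamma)>0$. Then the $\Gamma$-inequality $\sum_{j\in[n]}[p^-(\Gamma,j)+r(\Gamma,b)]x_j\ge r(\Gamma,b)(\beta(\Gamma,b)+1)+\sum_{i\in[m]:\bar a_i\in E(\Gamma)}b_i$ is valid for $Q^*(A,b)$.
   Context: Notation: $[n]=\{1,\dots,n\}$ with addition mod $n$ (index $0$ identified with $n$); for $a,c\in[n]$ with $t\ge0$ minimal such that $a+t\equiv c\pmod n$, $[a,c)_n=\{a,\dots,a+t-1\}$ (mod $n$). An $m\times n$ $\{0,1\}$-matrix $A$ is circular if for each row $i$ there are $\ell_i\in[n]$ and an integer $2\le k_i\le n-1$ such that row $i$ is the incidence vector of $[\ell_i,\ell_i+k_i)_n$. $Q(A,b)=\{x\in\mathbb{R}^n:Ax\ge b,x\ge0\}$, $Q^*(A,b)=\operatorname{conv}(Q(A,b)\cap\mathbb{Z}^n)$. $D(A)$: node set $[n]$ (labels mod $n$); forward row arcs $a_i=(\ell_i-1,\ell_i+k_i-1)$ ($i\in[m]$), forward short arcs $a_{m+j}=(j-1,j)$ ($j\in[n]$), reverse row arcs $\bar a_i=(\ell_i+k_i-1,\ell_i-1)$, reverse short arcs $\bar a_{m+j}=(j,j-1)$; lengths $k_i$, $1$, $-k_i$, $-1$ respectively. A circuit is a simple directed circuit; its winding number $p(\Gamma)$ satisfies $p(\Gamma)n=\sum_{a\in E(\Gamma)}l(a)$. A forward row arc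 $a_i$ jumps over $j$ iff $j\in[\ell_i,\ell_i+k_i)_n$; $(j-1,j)$ jumps over $j$ only; a reverse arc $\bar a_k$ jumps over $j$ iff $a_k$ does. $p^-(\Gamma,j)$ = number of reverse arcs of $\Gamma$ jumping over $j$. $t(\Gamma,b)=\sum_{i:a_i\in E(\Gamma)}b_i-\sum_{i:\bar a_i\in E(\Gamma)}b_i$, $\beta(\Gamma,b)=\lfloor t(\Gamma,b)/p(\Gamma)\rfloor$, $r(\Gamma,b)=t(\Gamma,b)-\beta(\Gamma,b)p(\Gamma)$. *)

theory Defs
  imports Complex_Main
begin

text \<open>A circular m x n matrix is given by its row data: row i (i in {1..m}) is the
incidence vector of the circular interval [l i, l i + k i)_n with l i in {1..n}
and 2 <= k i <= n - 1.  Column j in {1..n} lies in [a, a+k)_n iff (j - a) mod n < k.\<close>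

definition in_circ_interval :: "nat \<Rightarrow> int \<Rightarrow> int \<Rightarrow> int \<Rightarrow> bool" where
  "in_circ_interval n a k j \<longleftrightarrow> (j - a) mod int n < k"

definition circular_data :: "nat \<Rightarrow> nat \<Rightarrow> (nat \<Rightarrow> int) \<Rightarrow> (nat \<Rightarrow> int) \<Rightarrow> bool" where
  "circular_data m n l k \<longleftrightarrow>
     (\<forall>i\<in>{1..m}. 1 \<le> l i \<and> l i \<le> int n \<and> 2 \<le> k i \<and> k i \<le> int n - 1)"

definition circ_matrix :: "nat \<Rightarrow> (nat \<Rightarrow> int) \<Rightarrow> (nat \<Rightarrow> int) \<Rightarrow> nat \<Rightarrow> nat \<Rightarrow> int" where
  "circ_matrix n l k i j = (if in_circ_interval n (l i) (k i) (int j) then 1 else 0)"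

text \<open>Q(A,b) as a subset of R^n, vectors represented as functions nat => real
supported on {1..n}.\<close>

definition Qpoly :: "nat \<Rightarrow> nat \<Rightarrow> (nat \<Rightarrow> nat \<Rightarrow> int) \<Rightarrow> (nat \<Rightarrow> int) \<Rightarrow> (nat \<Rightarrow> real) set" where
  "Qpoly m n A b = {x. (\<forall>j. j \<notin> {1..n} \<longrightarrow> x j = 0) \<and> (\<forall>j\<in>{1..n}. 0 \<le> x j) \<and>
      (\<forall>i\<in>{1..m}. (\<Sum>j\<in>{1..n}. real_of_int (A i j) * x j) \<ge> real_of_int (b i))}"

definition conv_hull :: "(nat \<Rightarrow> real) set \<Rightarrow> (nat \<Rightarrow> real) set" where
  "conv_hull S = {x. \<exists>P w. finite P \<and> P \<noteq> {} \<and> P \<subseteq> S \<and> (\<forall>q\<in>P. 0 \<le> w q) \<and> sum w P = 1 \<and>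
                       (\<forall>j. x j = (\<Sum>q\<in>P. w q * q j))}"

definition Qint_hull :: "nat \<Rightarrow> nat \<Rightarrow> (nat \<Rightarrow> nat \<Rightarrow> int) \<Rightarrow> (nat \<Rightarrow> int) \<Rightarrow> (nat \<Rightarrow> real) set" where
  "Qint_hull m n A b = conv_hull (Qpoly m n A b \<inter> {x. \<forall>j. x j \<in> \<int>})"

text \<open>Arcs of D(A): F i is the forward arc a_i, R i the reverse arc (bar a_i),
for i in {1..m+n}; indices i <= m are row arcs, i = m + j are short arcs.
Nodes are the labels mod n, represented in {0..<n}.\<close>

datatype arc = F nat | R nat

fun arc_idx :: "arc \<Rightarrow> nat" where
  "arc_idx (F i) = i" | "arc_idx (R i) = i"

fun is_rev :: "arc \<Rightarrow> bool" where
  "is_rev (F i) = False" | "is_rev (R i) = True"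

definition fwd_tail :: "nat \<Rightarrow> nat \<Rightarrow> (nat \<Rightarrow> int) \<Rightarrow> (nat \<Rightarrow> int) \<Rightarrow> nat \<Rightarrow> int" where
  "fwd_tail m n l k i = (if i \<le> m then (l i - 1) mod int n else (int (i - m) - 1) mod int n)"

definition fwd_head :: "nat \<Rightarrow> nat \<Rightarrow> (nat \<Rightarrow> int) \<Rightarrow> (nat \<Rightarrow> int) \<Rightarrow> nat \<Rightarrow> int" where
  "fwd_head m n l k i = (if i \<le> m then (l i + k i - 1) mod int n else int (i - m) mod int n)"

definition fwd_len :: "nat \<Rightarrow> (nat \<Rightarrow> int) \<Rightarrow> nat \<Rightarrow> int" where
  "fwd_len m k i = (if i \<le> m then k i else 1)"

fun arc_tail :: "nat \<Rightarrow> nat \<Rightarrow> (nat \<Rightarrow> int) \<Rightarrow> (nat \<Rightarrow> int) \<Rightarrow> arc \<Rightarrow> int" where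
  "arc_tail m n l k (F i) = fwd_tail m n l k i"
| "arc_tail m n l k (R i) = fwd_head m n l k i"

fun arc_head :: "nat \<Rightarrow> nat \<Rightarrow> (nat \<Rightarrow> int) \<Rightarrow> (nat \<Rightarrow> int) \<Rightarrow> arc \<Rightarrow> int" where
  "arc_head m n l k (F i) = fwd_head m n l k i"
| "arc_head m n l k (R i) = fwd_tail m n l k i"

fun arc_len :: "nat \<Rightarrow> (nat \<Rightarrow> int) \<Rightarrow> arc \<Rightarrow> int" where
  "arc_len m k (F i) = fwd_len m k i"
| "arc_len m k (R i) = - fwd_len m k i"

definition valid_arc :: "nat \<Rightarrow> nat \<Rightarrow> arc \<Rightarrow> bool" where
  "valid_arc m n a \<longleftrightarrow> arc_idx a \<in> {1..m+n}"

definition jumps :: "nat \<Rightarrow> nat \<Rightarrow> (nat \<Rightarrow> int) \<Rightarrow> (nat \<Rightarrow> int) \<Rightarrow> arc \<Rightarrow> nat \<Rightarrow> bool" where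
  "jumps m n l k a j \<longleftrightarrow>
     (if arc_idx a \<le> m then in_circ_interval n (l (arc_idx a)) (k (arc_idx a)) (int j)
      else arc_idx a - m = j)"

text \<open>A (simple directed) circuit, given as the cyclic list of its arcs; E(Gamma) = set es.\<close>

definition is_circuit :: "nat \<Rightarrow> nat \<Rightarrow> (nat \<Rightarrow> int) \<Rightarrow> (nat \<Rightarrow> int) \<Rightarrow> arc list \<Rightarrow> bool" where
  "is_circuit m n l k es \<longleftrightarrow> es \<noteq> [] \<and> (\<forall>a\<in>set es. valid_arc m n a) \<and>
     (\<forall>t<length es. arc_head m n l k (es ! t) = arc_tail m n l k (es ! ((t + 1) mod length es))) \<and>
     distinct (map (arc_tail m n l k) es)"

text \<open>Winding number: p * n = sum of arc lengths.\<close>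

definition winding :: "nat \<Rightarrow> nat \<Rightarrow> (nat \<Rightarrow> int) \<Rightarrow> arc list \<Rightarrow> int" where
  "winding m n k es = (\<Sum>a\<in>set es. arc_len m k a) div int n"

definition p_minus :: "nat \<Rightarrow> nat \<Rightarrow> (nat \<Rightarrow> int) \<Rightarrow> (nat \<Rightarrow> int) \<Rightarrow> arc list \<Rightarrow> nat \<Rightarrow> nat" where
  "p_minus m n l k es j = card {a\<in>set es. is_rev a \<and> jumps m n l k a j}"

definition t_val :: "nat \<Rightarrow> (nat \<Rightarrow> int) \<Rightarrow> arc list \<Rightarrow> int" where
  "t_val m b es = (\<Sum>i\<in>{i\<in>{1..m}. F i \<in> set es}. b i) - (\<Sum>i\<in>{i\<in>{1..m}. R i \<in> set es}. b i)"

definition beta_val :: "nat \<Rightarrow> nat \<Rightarrow> (nat \<Rightarrow> int) \<Rightarrow> (nat \<Rightarrow> int) \<Rightarrow> arc list \<Rightarrow> int" where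
  "beta_val m n k b es = \<lfloor>real_of_int (t_val m b es) / real_of_int (winding m n k es)\<rfloor>"

definition r_val :: "nat \<Rightarrow> nat \<Rightarrow> (nat \<Rightarrow> int) \<Rightarrow> (nat \<Rightarrow> int) \<Rightarrow> arc list \<Rightarrow> int" where
  "r_val m n k b es = t_val m b es - beta_val m n k b es * winding m n k es"

end

theory Submission
  imports Defs
begin

lemma div_count:
  fixes n L t j :: int
  assumes "0 < n" "0 < L" "L \<le> n"
  shows "(t + L - j) div n - (t - j) div n = (if (j - t - 1) mod n < L then 1 else 0)"
proof -
  define u where "u = (j - t - 1) mod n"
  define q where "q = (j - t - 1) div n"
  have e: "j - t - 1 = u + n * q" unfolding u_def q_def by simp
  have u: "0 \<le> u" "u < n" unfolding u_def using assms by auto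
  have a: "t - j = (- u - 1) + n * (- q)" using e by (simp add: algebra_simps)
  have b: "t + L - j = (L - u - 1) + n * (- q)" using e by (simp add: algebra_simps)
  have sh: "\<And>x c. (x + n * c) div n = x div n + c" using assms by simp
  have d1: "(t - j) div n = - 1 - q"
  proof -
    have "(t - j) div n = (- u - 1) div n + (- q)" unfolding a by (rule sh)
    moreover have "(- u - 1) div n = -1" using u by (intro int_div_pos_eq[where r="n - u - 1"]) auto
    ultimately show ?thesis by simp
  qed
  show ?thesis
  proof (cases "u < L")
    case True
    have "(t + L - j) div n = (L - u - 1) div n + (- q)" unfolding b by (rule sh)
    moreover have "(L - u - 1) div n = 0" using u True assms by (intro div_pos_pos_trivial) auto
    ultimately show ?thesis using d1 True u_def by simp
  next
    case False
    have "(t + L - j) div n = (L - u - 1) div n + (- q)" unfolding b by (rule sh)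
    moreover have "(L - u - 1) div n = -1" using u False assms by (intro int_div_pos_eq[where r="n + L - u - 1"]) auto
    ultimately show ?thesis using d1 False u_def by simp
  qed
qed

lemma fwd_props:
  assumes n: "0 < n" and cd: "circular_data m n l k" and i: "i \<in> {1..m+n}"
  shows "0 < fwd_len m k i" "fwd_len m k i \<le> int n"
    "fwd_head m n l k i = (fwd_tail m n l k i + fwd_len m k i) mod int n"
    "fwd_tail m n l k i mod int n = fwd_tail m n l k i"
    "j \<in> {1..n} \<Longrightarrow> jumps m n l k (F i) j \<longleftrightarrow> (int j - fwd_tail m n l k i - 1) mod int n < fwd_len m k i"
proof -
  show "fwd_tail m n l k i mod int n = fwd_tail m n l k i" by (simp add: fwd_tail_def)
next
  have "0 < fwd_len m k i \<and> fwd_len m k i \<le> int n"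
  proof (cases "i \<le> m")
    case True
    then have "i \<in> {1..m}" using i by auto
    then have "2 \<le> k i \<and> k i \<le> int n - 1" using cd unfolding circular_data_def by blast
    then show ?thesis using True by (simp add: fwd_len_def)
  qed (use n in \<open>auto simp: fwd_len_def\<close>)
  then show "0 < fwd_len m k i" "fwd_len m k i \<le> int n" by auto
next
  show "fwd_head m n l k i = (fwd_tail m n l k i + fwd_len m k i) mod int n"
  proof (cases "i \<le> m")
    case True
    have "((l i - 1) mod int n + k i) mod int n = (l i - 1 + k i) mod int n" by (rule mod_add_left_eq)
    also have "l i - 1 + k i = l i + k i - 1" by simp
    finally have X: "((l i - 1) mod int n + k i) mod int n = (l i + k i - 1) mod int n" .
    show ?thesis using True X unfolding fwd_head_def fwd_tail_def fwd_len_def by (simp only: if_True)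
  next
    case False
    have "((int (i - m) - 1) mod int n + 1) mod int n = (int (i - m) - 1 + 1) mod int n" by (rule mod_add_left_eq)
    then show ?thesis using False unfolding fwd_head_def fwd_tail_def fwd_len_def by (simp only: if_False diff_add_cancel)
  qed
next
  assume j: "j \<in> {1..n}"
  show "jumps m n l k (F i) j \<longleftrightarrow> (int j - fwd_tail m n l k i - 1) mod int n < fwd_len m k i"
  proof (cases "i \<le> m")
    case True
    have "(int j - (l i - 1) mod int n - 1) mod int n = ((int j - 1) - (l i - 1) mod int n) mod int n"
      by (simp add: algebra_simps)
    also have "\<dots> = (int j - l i) mod int n" by (simp add: mod_diff_right_eq)
    finally show ?thesis using True by (simp add: jumps_def fwd_tail_def fwd_len_def in_circ_interval_def)
  next
    case False
    define j0 where "j0 = i - m"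
    have j0: "1 \<le> j0" "j0 \<le> n" using False i j0_def by auto
    have ii: "int (i - m) = int j0" using j0_def by simp
    have "(int j - (int j0 - 1) mod int n - 1) mod int n = ((int j - 1) - (int j0 - 1) mod int n) mod int n"
      by (simp add: algebra_simps)
    also have "\<dots> = (int j - int j0) mod int n" by (simp add: mod_diff_right_eq)
    finally have e: "(int j - (int j0 - 1) mod int n - 1) mod int n = (int j - int j0) mod int n" .
    have "(int j - int j0) mod int n < 1 \<longleftrightarrow> j = j0"
    proof (cases "j0 \<le> j")
      case True
      then have "(int j - int j0) mod int n = int j - int j0" using j j0 by (intro mod_pos_pos_trivial) auto
      then show ?thesis using True by auto
    next
      case False
      then have "(int j - int j0) mod int n = int j - int j0 + int n" using j j0
        by (intro int_mod_pos_eq[where q="-1"]) auto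
      then show ?thesis using False j j0 by auto
    qed
    moreover have "i - m = j0" using j0_def by simp
    ultimately show ?thesis using False e
      by (auto simp: jumps_def fwd_tail_def fwd_len_def)
  qed
qed

lemma arc_props:
  assumes n: "0 < n" and cd: "circular_data m n l k" and a: "valid_arc m n a"
  shows "arc_head m n l k a = (arc_tail m n l k a + arc_len m k a) mod int n"
    "j \<in> {1..n} \<Longrightarrow> (arc_tail m n l k a + arc_len m k a - int j) div int n - (arc_tail m n l k a - int j) div int n
        = (if jumps m n l k a j then (if is_rev a then -1 else 1) else 0)"
proof -
  obtain i where i: "i \<in> {1..m+n}" "a = F i \<or> a = R i" using a unfolding valid_arc_def by (cases a) auto
  note fp = fwd_props[OF n cd i(1)]
  show "arc_head m n l k a = (arc_tail m n l k a + arc_len m k a) mod int n"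
    using i(2)
  proof
    assume "a = F i" then show ?thesis using fp by simp
  next
    assume "a = R i"
    then show ?thesis using fp(3,4) by (simp add: mod_diff_left_eq)
  qed
  assume j: "j \<in> {1..n}"
  have jr: "jumps m n l k (R i) j = jumps m n l k (F i) j" by (simp add: jumps_def)
  show "(arc_tail m n l k a + arc_len m k a - int j) div int n - (arc_tail m n l k a - int j) div int n
        = (if jumps m n l k a j then (if is_rev a then -1 else 1) else 0)"
    using i(2)
  proof
    assume "a = F i" then show ?thesis using fp(5)[OF j] div_count[OF _ fp(1,2), of "fwd_tail m n l k i" "int j"] n
      by simp
  next
    assume aR: "a = R i"
    define h where "h = fwd_head m n l k i"
    define L where "L = fwd_len m k i"
    define t where "t = fwd_tail m n l k i"
    have dc: "((h - L) + L - int j) div int n - ((h - L) - int j) div int n = (if (int j - (h - L) - 1) mod int n < L then 1 else 0)"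
      using div_count[OF _ fp(1,2), of "h - L" "int j"] n L_def by simp
    have "(int j - (h - L) - 1) mod int n = ((int j + L - 1) - (t + L) mod int n) mod int n"
      using fp(3) h_def L_def t_def by (simp add: algebra_simps)
    also have "\<dots> = ((int j + L - 1) - (t + L)) mod int n" by (rule mod_diff_right_eq)
    also have "(int j + L - 1) - (t + L) = int j - t - 1" by simp
    finally have "(int j - (h - L) - 1) mod int n = (int j - t - 1) mod int n" .
    then show ?thesis using dc aR jr fp(5)[OF j] h_def L_def t_def by (auto simp: algebra_simps)
  qed
qed

lemma sum_rotate:
  fixes N :: nat
  assumes "0 < N"
  shows "(\<Sum>t<N. g ((t + 1) mod N)) = (\<Sum>t<N. (g t :: int))"
proof -
  obtain M where M: "N = Suc M" using assms by (cases N) auto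
  have "(\<Sum>t<Suc M. g ((t + 1) mod Suc M)) = (\<Sum>t<M. g ((t + 1) mod Suc M)) + g 0"
    by simp
  also have "(\<Sum>t<M. g ((t + 1) mod Suc M)) = (\<Sum>t<M. g (Suc t))"
    by (rule sum.cong) auto
  also have "(\<Sum>t<M. g (Suc t)) + g 0 = (\<Sum>t<Suc M. g t)"
    unfolding sum.lessThan_Suc_shift by (rule add.commute)
  finally show ?thesis using M by simp
qed

lemma circ_count:
  assumes n: "0 < n" and cd: "circular_data m n l k" and ci: "is_circuit m n l k es"
    and j: "j \<in> {1..n}"
  shows "int (card {a\<in>set es. \<not> is_rev a \<and> jumps m n l k a j}) - int (p_minus m n l k es j)
           = winding m n k es"
proof -
  define N where "N = length es"
  define tl where "tl t = arc_tail m n l k (es ! t)" for t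
  define hd where "hd t = arc_head m n l k (es ! t)" for t
  define ln where "ln t = arc_len m k (es ! t)" for t
  define w where "w t = (tl t + ln t) div int n" for t
  define g where "g v = (v - int j) div int n" for v
  have ne: "es \<noteq> []" and va: "\<forall>a\<in>set es. valid_arc m n a"
    and cyc: "\<forall>t<N. hd t = tl ((t + 1) mod N)"
    and dm: "distinct (map (arc_tail m n l k) es)"
    using ci unfolding is_circuit_def N_def hd_def tl_def by auto
  have N0: "0 < N" using ne N_def by simp
  have dist: "distinct es" using dm by (simp add: distinct_map)
  have tosum: "\<And>f :: arc \<Rightarrow> int. (\<Sum>a\<in>set es. f a) = (\<Sum>t<N. f (es ! t))"
  proof -
    fix f :: "arc \<Rightarrow> int"
    have "(\<Sum>a\<in>set es. f a) = sum_list (map f es)" using dist by (simp add: sum_list_distinct_conv_sum_set)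
    also have "\<dots> = (\<Sum>t = 0..<N. f (es ! t))" by (simp add: sum_list_sum_nth N_def)
    finally show "(\<Sum>a\<in>set es. f a) = (\<Sum>t<N. f (es ! t))" by (simp add: atLeast0LessThan)
  qed
  have vt: "\<And>t. t < N \<Longrightarrow> valid_arc m n (es ! t)" using va N_def by auto
  have decomp: "\<And>t. t < N \<Longrightarrow> tl t + ln t = hd t + int n * w t"
  proof -
    fix t assume t: "t < N"
    have "hd t = (tl t + ln t) mod int n" using arc_props(1)[OF n cd vt[OF t]] hd_def tl_def ln_def by simp
    then show "tl t + ln t = hd t + int n * w t" unfolding w_def by (simp add: mult.commute)
  qed
  have tele: "\<And>f :: int \<Rightarrow> int. (\<Sum>t<N. f (hd t)) = (\<Sum>t<N. f (tl t) :: int)"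
  proof -
    fix f :: "int \<Rightarrow> int"
    have "(\<Sum>t<N. f (hd t)) = (\<Sum>t<N. f (tl ((t + 1) mod N)))" using cyc by (intro sum.cong) auto
    also have "\<dots> = (\<Sum>t<N. f (tl t))" using sum_rotate[OF N0, of "\<lambda>t. f (tl t)"] by simp
    finally show "(\<Sum>t<N. f (hd t)) = (\<Sum>t<N. f (tl t))" .
  qed
  have "(\<Sum>t<N. ln t) = (\<Sum>t<N. (hd t - tl t) + int n * w t)"
    using decomp by (intro sum.cong) (auto simp: algebra_simps)
  also have "\<dots> = (\<Sum>t<N. hd t) - (\<Sum>t<N. tl t) + int n * (\<Sum>t<N. w t)"
    by (simp add: sum.distrib sum_subtractf sum_distrib_left)
  also have "\<dots> = int n * (\<Sum>t<N. w t)" using tele[of "\<lambda>x. x"] by simp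
  finally have lsum: "(\<Sum>t<N. ln t) = int n * (\<Sum>t<N. w t)" .
  have wind: "winding m n k es = (\<Sum>t<N. w t)"
    unfolding winding_def using tosum[of "arc_len m k"] lsum n by (simp add: ln_def)
  define c where "c a = (if jumps m n l k a j then (if is_rev a then -1 else 1) else (0::int))" for a
  have "(\<Sum>t<N. c (es ! t)) = (\<Sum>t<N. w t + (g (hd t) - g (tl t)))"
  proof (rule sum.cong)
    fix t assume "t \<in> {..<N}"
    then have t: "t < N" by simp
    have "c (es ! t) = (tl t + ln t - int j) div int n - (tl t - int j) div int n"
      using arc_props(2)[OF n cd vt[OF t] j] unfolding c_def tl_def ln_def by simp
    also have "(tl t + ln t - int j) = (hd t - int j) + int n * w t" using decomp[OF t] by simp
    also have "((hd t - int j) + int n * w t) div int n = g (hd t) + w t" unfolding g_def using n by simp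
    finally show "c (es ! t) = w t + (g (hd t) - g (tl t))" unfolding g_def by simp
  qed simp
  also have "\<dots> = (\<Sum>t<N. w t)" using tele[of g] by (simp add: sum.distrib sum_subtractf)
  finally have csum: "(\<Sum>a\<in>set es. c a) = winding m n k es" using tosum[of c] wind by simp
  have "(\<Sum>a\<in>set es. c a) = (\<Sum>a\<in>set es. (if \<not> is_rev a \<and> jumps m n l k a j then 1 else 0) - (if is_rev a \<and> jumps m n l k a j then 1 else 0))"
    unfolding c_def by (intro sum.cong) auto
  also have "\<dots> = int (card {a\<in>set es. \<not> is_rev a \<and> jumps m n l k a j}) - int (card {a\<in>set es. is_rev a \<and> jumps m n l k a j})"
    by (simp add: sum_subtractf sum.inter_filter[symmetric])
  finally show ?thesis using csum unfolding p_minus_def by simp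
qed

lemma arith_key:
  fixes Y T BR BF :: real and p be r T' :: int
  assumes "BR \<le> Y" "BF \<le> Y + of_int p * T" "T = of_int T'" "BF - BR = of_int (be * p + r)"
    "0 \<le> r" "r \<le> p"
  shows "Y + of_int r * T \<ge> of_int (r * (be + 1)) + BR"
proof (cases "be + 1 \<le> T'")
  case True
  have "of_int (r * (be + 1)) \<le> (of_int (r * T') :: real)"
    using True assms(5) by (simp only: of_int_le_iff) (rule mult_left_mono)
  then show ?thesis using assms(1,3) by simp
next
  case False
  have "0 \<le> (p - r) * (be - T')" using False assms(6) by (intro mult_nonneg_nonneg) auto
  then have "r * (be + 1) \<le> (be * p + r) - p * T' + r * T'" by (simp add: algebra_simps)
  then have "(of_int (r * (be + 1)) :: real) \<le> of_int (be * p + r) - of_int p * of_int T' + of_int r * of_int T'"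
    by (simp only: of_int_le_iff[symmetric, where 'a=real]) simp
  then show ?thesis using assms(2,3,4) by simp
qed

lemma swap_card:
  fixes x :: "nat \<Rightarrow> real"
  assumes "finite S"
  shows "(\<Sum>a\<in>S. \<Sum>j\<in>J. (if jumps m n l k a j then x j else 0))
       = (\<Sum>j\<in>J. real (card {a\<in>S. jumps m n l k a j}) * x j)"
proof -
  have "(\<Sum>a\<in>S. \<Sum>j\<in>J. (if jumps m n l k a j then x j else 0))
      = (\<Sum>j\<in>J. \<Sum>a\<in>S. (if jumps m n l k a j then x j else 0))" by (rule sum.swap)
  also have "\<dots> = (\<Sum>j\<in>J. real (card {a\<in>S. jumps m n l k a j}) * x j)"
  proof (rule sum.cong)
    fix j
    have "(\<Sum>a\<in>S. (if jumps m n l k a j then x j else 0)) = (\<Sum>a\<in>{a\<in>S. jumps m n l k a j}. x j)"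
      using sum.inter_filter[OF assms, of "\<lambda>_. x j" "\<lambda>a. jumps m n l k a j"] by simp
    also have "\<dots> = real (card {a\<in>S. jumps m n l k a j}) * x j" by simp
    finally show "(\<Sum>a\<in>S. (if jumps m n l k a j then x j else 0)) = real (card {a\<in>S. jumps m n l k a j}) * x j" .
  qed simp
  finally show ?thesis .
qed

lemma int_point:
  fixes m n :: nat and l k b :: "nat \<Rightarrow> int" and es :: "arc list" and x :: "nat \<Rightarrow> real"
  assumes n: "0 < n"
    and cd: "circular_data m n l k"
    and ci: "is_circuit m n l k es"
    and wp: "winding m n k es > 0"
    and xQ: "x \<in> Qpoly m n (circ_matrix n l k) b" and xZ: "\<forall>j. x j \<in> \<int>"
  shows "(\<Sum>j\<in>{1..n}. real_of_int (int (p_minus m n l k es j) + r_val m n k b es) * x j)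
       \<ge> real_of_int (r_val m n k b es * (beta_val m n k b es + 1)
                      + (\<Sum>i\<in>{i\<in>{1..m}. R i \<in> set es}. b i))"
proof -
  define p where "p = winding m n k es"
  define pm where "pm j = p_minus m n l k es j" for j
  define h where "h a = (\<Sum>j\<in>{1..n}. (if jumps m n l k a j then x j else 0))" for a
  define SF where "SF = {i\<in>{1..m}. F i \<in> set es}"
  define SR where "SR = {i\<in>{1..m}. R i \<in> set es}"
  define BF where "BF = (\<Sum>i\<in>SF. b i)"
  define BR where "BR = (\<Sum>i\<in>SR. b i)"
  define Y where "Y = (\<Sum>j\<in>{1..n}. real (pm j) * x j)"
  define T where "T = (\<Sum>j\<in>{1..n}. x j)"
  have xnn: "\<And>j. 0 \<le> x j"
  proof -
    fix j show "0 \<le> x j" using xQ unfolding Qpoly_def by (cases "j \<in> {1..n}") auto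
  qed
  have hnn: "\<And>a. 0 \<le> h a" unfolding h_def using xnn by (intro sum_nonneg) auto
  have row: "\<And>i. i \<in> {1..m} \<Longrightarrow> real_of_int (b i) \<le> h (F i)" "\<And>i. i \<in> {1..m} \<Longrightarrow> real_of_int (b i) \<le> h (R i)"
  proof -
    fix i assume i: "i \<in> {1..m}"
    have "real_of_int (b i) \<le> (\<Sum>j\<in>{1..n}. real_of_int (circ_matrix n l k i j) * x j)"
      using xQ i unfolding Qpoly_def by auto
    also have "\<dots> = h (F i)" unfolding h_def
      by (intro sum.cong) (use i in \<open>auto simp: circ_matrix_def jumps_def\<close>)
    finally show "real_of_int (b i) \<le> h (F i)" .
    moreover have "h (R i) = h (F i)" unfolding h_def jumps_def arc_idx.simps by (rule refl)
    ultimately show "real_of_int (b i) \<le> h (R i)" by simp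
  qed
  have fin: "finite (set es)" by simp
  have hsumR: "(\<Sum>a\<in>{a\<in>set es. is_rev a}. h a) = Y"
    unfolding h_def Y_def pm_def p_minus_def
    by (subst swap_card) (auto intro!: sum.cong arg_cong[where f=card])
  have hsumF: "(\<Sum>a\<in>{a\<in>set es. \<not> is_rev a}. h a) = (\<Sum>j\<in>{1..n}. real (card {a\<in>set es. \<not> is_rev a \<and> jumps m n l k a j}) * x j)"
    unfolding h_def
    by (subst swap_card) (auto intro!: sum.cong arg_cong[where f=card])
  also have "\<dots> = (\<Sum>j\<in>{1..n}. (real (pm j) + of_int p) * x j)"
  proof (rule sum.cong)
    fix j assume j: "j \<in> {1..n}"
    have ceq: "int (card {a\<in>set es. \<not> is_rev a \<and> jumps m n l k a j}) = int (pm j) + p"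
      using circ_count[OF n cd ci j] unfolding pm_def p_def by simp
    have "real (card {a\<in>set es. \<not> is_rev a \<and> jumps m n l k a j}) = real (pm j) + of_int p"
      using arg_cong[OF ceq, of "of_int :: int \<Rightarrow> real"] by simp
    then show "real (card {a\<in>set es. \<not> is_rev a \<and> jumps m n l k a j}) * x j = (real (pm j) + of_int p) * x j"
      by simp
  qed simp
  also have "\<dots> = Y + of_int p * T" unfolding Y_def T_def
    by (simp add: algebra_simps sum.distrib sum_distrib_left)
  finally have hF: "(\<Sum>a\<in>{a\<in>set es. \<not> is_rev a}. h a) = Y + of_int p * T" .
  have "real_of_int BR = (\<Sum>i\<in>SR. real_of_int (b i))" unfolding BR_def by simp
  also have "\<dots> \<le> (\<Sum>i\<in>SR. h (R i))" using row(2) unfolding SR_def by (intro sum_mono) auto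
  also have "\<dots> = (\<Sum>a\<in>R ` SR. h a)" by (subst sum.reindex) (auto simp: inj_on_def)
  also have "\<dots> \<le> (\<Sum>a\<in>{a\<in>set es. is_rev a}. h a)"
    using hnn unfolding SR_def by (intro sum_mono2) auto
  finally have BRY: "real_of_int BR \<le> Y" using hsumR by simp
  have "real_of_int BF = (\<Sum>i\<in>SF. real_of_int (b i))" unfolding BF_def by simp
  also have "\<dots> \<le> (\<Sum>i\<in>SF. h (F i))" using row(1) unfolding SF_def by (intro sum_mono) auto
  also have "\<dots> = (\<Sum>a\<in>F ` SF. h a)" by (subst sum.reindex) (auto simp: inj_on_def)
  also have "\<dots> \<le> (\<Sum>a\<in>{a\<in>set es. \<not> is_rev a}. h a)"
    using hnn unfolding SF_def by (intro sum_mono2) auto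
  finally have BFY: "real_of_int BF \<le> Y + of_int p * T" using hF by simp
  have TZ: "T \<in> \<int>" unfolding T_def using xZ by (intro Ints_sum) auto
  then obtain T' where T': "T = of_int T'" by (auto elim: Ints_cases)
  have tv: "t_val m b es = BF - BR" unfolding t_val_def BF_def BR_def SF_def SR_def by simp
  have bv: "beta_val m n k b es = (BF - BR) div p"
    unfolding beta_val_def tv p_def using floor_divide_of_int_eq[of "BF - BR" "winding m n k es", where 'a=real] by simp
  have rv: "r_val m n k b es = (BF - BR) mod p"
    unfolding r_val_def tv bv p_def by (simp add: minus_div_mult_eq_mod)
  have p0: "0 < p" using wp p_def by simp
  have key: "Y + of_int ((BF - BR) mod p) * T \<ge> of_int ((BF - BR) mod p * ((BF - BR) div p + 1)) + real_of_int BR"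
  proof (rule arith_key[OF BRY BFY T'])
    have "BF - BR = (BF - BR) div p * p + (BF - BR) mod p" by simp
    then show "real_of_int BF - real_of_int BR = of_int ((BF - BR) div p * p + (BF - BR) mod p)"
      by (metis of_int_diff)
    show "0 \<le> (BF - BR) mod p" using p0 by simp
    show "(BF - BR) mod p \<le> p" using p0 by (simp add: order_less_imp_le)
  qed
  have lhs: "(\<Sum>j\<in>{1..n}. real_of_int (int (p_minus m n l k es j) + r_val m n k b es) * x j)
      = Y + of_int ((BF - BR) mod p) * T"
    unfolding Y_def T_def rv pm_def by (simp add: algebra_simps sum.distrib sum_distrib_left sum_distrib_right)
  have rhs: "real_of_int (r_val m n k b es * (beta_val m n k b es + 1)
                      + (\<Sum>i\<in>{i\<in>{1..m}. R i \<in> set es}. b i))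
     = of_int ((BF - BR) mod p * ((BF - BR) div p + 1)) + real_of_int BR"
    unfolding rv bv BR_def SR_def by simp
  show ?thesis using key lhs rhs by linarith
qed

lemma hull_valid:
  fixes c :: "nat \<Rightarrow> real" and d :: real
  assumes "x \<in> conv_hull S" "\<And>y. y \<in> S \<Longrightarrow> d \<le> (\<Sum>j\<in>J. c j * y j)"
  shows "d \<le> (\<Sum>j\<in>J. c j * x j)"
proof -
  obtain P w where P: "finite P" "P \<noteq> {}" "P \<subseteq> S" "\<forall>q\<in>P. 0 \<le> w q" "sum w P = 1"
    "\<forall>j. x j = (\<Sum>q\<in>P. w q * q j)"
    using assms(1) unfolding conv_hull_def by blast
  have "d = (\<Sum>q\<in>P. w q * d)" using P(5) by (simp add: sum_distrib_right[symmetric])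
  also have "\<dots> \<le> (\<Sum>q\<in>P. w q * (\<Sum>j\<in>J. c j * q j))"
    using P(3,4) assms(2) by (intro sum_mono mult_left_mono) auto
  also have "\<dots> = (\<Sum>j\<in>J. c j * x j)"
  proof -
    have "(\<Sum>q\<in>P. w q * (\<Sum>j\<in>J. c j * q j)) = (\<Sum>q\<in>P. \<Sum>j\<in>J. c j * (w q * q j))"
      by (simp add: sum_distrib_left mult.left_commute)
    also have "\<dots> = (\<Sum>j\<in>J. \<Sum>q\<in>P. c j * (w q * q j))" by (rule sum.swap)
    also have "\<dots> = (\<Sum>j\<in>J. c j * x j)" using P(6) by (simp add: sum_distrib_left)
    finally show ?thesis .
  qed
  finally show ?thesis .
qed

theorem theorem4p5:
  fixes m n :: nat and l k b :: "nat \<Rightarrow> int" and es :: "arc list"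
  assumes "0 < n"
    and "circular_data m n l k"
    and "\<forall>i\<in>{1..m}. 0 \<le> b i"
    and "is_circuit m n l k es"
    and "winding m n k es > 0"
  shows "\<forall>x\<in>Qint_hull m n (circ_matrix n l k) b.
     (\<Sum>j\<in>{1..n}. real_of_int (int (p_minus m n l k es j) + r_val m n k b es) * x j)
       \<ge> real_of_int (r_val m n k b es * (beta_val m n k b es + 1)
                      + (\<Sum>i\<in>{i\<in>{1..m}. R i \<in> set es}. b i))"
proof
  fix x assume "x \<in> Qint_hull m n (circ_matrix n l k) b"
  then show "(\<Sum>j\<in>{1..n}. real_of_int (int (p_minus m n l k es j) + r_val m n k b es) * x j)
       \<ge> real_of_int (r_val m n k b es * (beta_val m n k b es + 1)
                      + (\<Sum>i\<in>{i\<in>{1..m}. R i \<in> set es}. b i))"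
    unfolding Qint_hull_def
  proof (rule hull_valid)
    fix y assume "y \<in> Qpoly m n (circ_matrix n l k) b \<inter> {x. \<forall>j. x j \<in> \<int>}"
    then show "real_of_int (r_val m n k b es * (beta_val m n k b es + 1)
                      + (\<Sum>i\<in>{i\<in>{1..m}. R i \<in> set es}. b i))
        \<le> (\<Sum>j\<in>{1..n}. real_of_int (int (p_minus m n l k es j) + r_val m n k b es) * y j)"
      using int_point[OF assms(1,2,4,5)] by blast
  qed
qed

end
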